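(* Let $G$ be a connected weighted multigraph on the vertex set $V$, $|V|\ge2$, with positive edge weights. Let $\mathcal A\subseteq\mathbb R$ and let $\varphi_\alpha:(0,\infty)\to(0,\infty)$, $\alpha\in\mathcal A$, be a family of functions. For $\alpha\in\mathcal A$ let $G_\alpha$ be obtained from $G$ by replacing each edge weight $w$ by $\varphi_\alpha(w)$, let $L_\alpha$ be the Laplacian matrix of $G_\alpha$, let $Q_\alpha=(I+L_\alpha)^{-1}=(q_{ij}(\alpha))$, and let $\theta_\alpha>0$ be a scaling factor; the logarithmic forest distance is $d^F_\alpha(i,j)=\theta_\alpha\bigl(\tfrac12(\ln q_{ii}(\alpha)+\ln q_{jj}(\alpha))-\ln q_{ij}(\alpha)\bigr)$. Then for every $\alpha\in\mathcal A$ there are a constant $c_\alpha>0$ and a graph $\tilde G_\alpha$ obtained from $G_\alpha$ by multiplying all edge weights by $c_\alpha$ and attaching loops (with positive weights) to some vertices so that its weighted adjacency matrix $A(\alpha)$ has constant row sums, such that the spectral radius of $A(\alpha)$ is less than $1$, $\tilde R_\alpha=\sum_{k\ge0}A(\alpha)^k=(I-A(\alpha))^{-1}=(\tilde r_{ij}(\alpha))$ is finite, and for all $i,j\in V$ $$d^F_\alpha(i,j)=\theta_\alpha\Bigl(\tfrac12\bigl(\ln\tilde r_{ii}(\alpha)+\ln\tilde r_{jj}(\alpha)\bigr)-\ln\tilde r_{ij}(\alpha)\Bigr).$$ Thus the family of logarithmic forest distances coincides with a family of modified walk distances obtained by balancing the graphs $G_\alpha$ by loops.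
   Context: The weighted adjacency matrix $A(H)=(a_{ij})$ of a weighted multigraph $H$ has $a_{ij}$ equal to the sum of the weights of the edges joining $i$ and $j$ (loops included). The Laplacian matrix is $L(H)=\operatorname{diag}(A(H)\mathbf 1)-A(H)$. *)

theory Defs
  imports "Jordan_Normal_Form.Spectral_Radius" "Jordan_Normal_Form.Gauss_Jordan_Elimination"
begin

text \<open>A weighted multigraph on the vertex set {0..<n}: a finite set of edge names E,
  each edge e joining the endpoints ends e (a loop if both are equal), with weight w e.\<close>

definition joins :: "('e \<Rightarrow> nat \<times> nat) \<Rightarrow> 'e \<Rightarrow> nat \<Rightarrow> nat \<Rightarrow> bool" where
  "joins ends e i j \<longleftrightarrow> ends e = (i, j) \<or> ends e = (j, i)"

definition wmultigraph :: "nat \<Rightarrow> 'e set \<Rightarrow> ('e \<Rightarrow> nat \<times> nat) \<Rightarrow> ('e \<Rightarrow> real) \<Rightarrow> bool" where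
  "wmultigraph n E ends w \<longleftrightarrow> finite E \<and>
     (\<forall>e\<in>E. fst (ends e) < n \<and> snd (ends e) < n \<and> w e > 0)"

definition mg_connected :: "nat \<Rightarrow> 'e set \<Rightarrow> ('e \<Rightarrow> nat \<times> nat) \<Rightarrow> bool" where
  "mg_connected n E ends \<longleftrightarrow>
     (\<forall>i<n. \<forall>j<n. (i, j) \<in> {(u, v). \<exists>e\<in>E. joins ends e u v}\<^sup>*)"

definition adj_mat :: "nat \<Rightarrow> 'e set \<Rightarrow> ('e \<Rightarrow> nat \<times> nat) \<Rightarrow> ('e \<Rightarrow> real) \<Rightarrow> real mat" where
  "adj_mat n E ends w = mat n n (\<lambda>(i, j). \<Sum>e\<in>{e\<in>E. joins ends e i j}. w e)"

definition laplacian :: "nat \<Rightarrow> real mat \<Rightarrow> real mat" where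
  "laplacian n A = mat n n (\<lambda>(i, j). (if i = j then (\<Sum>k<n. A $$ (i, k)) else 0) - A $$ (i, j))"

definition row_sums_const :: "nat \<Rightarrow> real mat \<Rightarrow> bool" where
  "row_sums_const n A \<longleftrightarrow> (\<exists>s. \<forall>i<n. (\<Sum>j<n. A $$ (i, j)) = s)"

definition log_dist :: "real \<Rightarrow> real mat \<Rightarrow> nat \<Rightarrow> nat \<Rightarrow> real" where
  "log_dist \<theta> M i j = \<theta> * ((ln (M $$ (i, i)) + ln (M $$ (j, j))) / 2 - ln (M $$ (i, j)))"

definition forest_mat :: "nat \<Rightarrow> real mat \<Rightarrow> real mat" where
  "forest_mat n L = the (mat_inverse (1\<^sub>m n + L))"

definition log_forest_dist :: "nat \<Rightarrow> 'e set \<Rightarrow> ('e \<Rightarrow> nat \<times> nat) \<Rightarrow> ('e \<Rightarrow> real) \<Rightarrow> real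
    \<Rightarrow> nat \<Rightarrow> nat \<Rightarrow> real" where
  "log_forest_dist n E ends w \<theta> i j =
     log_dist \<theta> (forest_mat n (laplacian n (adj_mat n E ends w))) i j"

end

theory Submission
  imports Defs
begin

lemma mult_entry:
  fixes A B :: "'a::comm_semiring_1 mat"
  assumes "A \<in> carrier_mat n n" "B \<in> carrier_mat n n" "i < n" "j < n"
  shows "(A * B) $$ (i, j) = (\<Sum>m<n. A $$ (i, m) * B $$ (m, j))"
  using assms by (simp add: scalar_prod_def lessThan_atLeast0)

lemma pow_props:
  fixes A :: "real mat"
  assumes A: "A \<in> carrier_mat n n" and nn: "\<forall>i<n. \<forall>j<n. A $$ (i, j) \<ge> 0"
    and rs: "\<forall>i<n. (\<Sum>j<n. A $$ (i, j)) = s"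
  shows "A ^\<^sub>m k \<in> carrier_mat n n \<and> (\<forall>i<n. \<forall>j<n. (A ^\<^sub>m k) $$ (i, j) \<ge> 0)
    \<and> (\<forall>i<n. (\<Sum>j<n. (A ^\<^sub>m k) $$ (i, j)) = s ^ k)"
proof (induction k)
  case 0
  then show ?case using A by auto
next
  case (Suc k)
  have C: "A ^\<^sub>m k \<in> carrier_mat n n" using Suc by auto
  have e: "\<And>i j. i < n \<Longrightarrow> j < n \<Longrightarrow> (A ^\<^sub>m k * A) $$ (i, j) = (\<Sum>m<n. (A ^\<^sub>m k) $$ (i, m) * A $$ (m, j))"
    using mult_entry[OF C A] by simp
  have "\<forall>i<n. \<forall>j<n. (A ^\<^sub>m Suc k) $$ (i, j) \<ge> 0"
    using Suc nn by (auto simp: e intro!: sum_nonneg)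
  moreover have "\<forall>i<n. (\<Sum>j<n. (A ^\<^sub>m Suc k) $$ (i, j)) = s ^ Suc k"
  proof (intro allI impI)
    fix i assume i: "i < n"
    have "(\<Sum>j<n. (A ^\<^sub>m Suc k) $$ (i, j)) = (\<Sum>j<n. \<Sum>m<n. (A ^\<^sub>m k) $$ (i, m) * A $$ (m, j))"
      using i by (simp add: e)
    also have "\<dots> = (\<Sum>m<n. (A ^\<^sub>m k) $$ (i, m) * (\<Sum>j<n. A $$ (m, j)))"
      by (subst sum.swap) (simp add: sum_distrib_left)
    also have "\<dots> = (\<Sum>m<n. (A ^\<^sub>m k) $$ (i, m) * s)" using rs by simp
    also have "\<dots> = s ^ Suc k" using Suc i by (simp add: sum_distrib_right[symmetric])
    finally show "(\<Sum>j<n. (A ^\<^sub>m Suc k) $$ (i, j)) = s ^ Suc k" .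
  qed
  ultimately show ?case using C A by auto
qed

lemma eig_bound:
  fixes A :: "real mat"
  assumes A: "A \<in> carrier_mat n n" and nn: "\<forall>i<n. \<forall>j<n. A $$ (i, j) \<ge> 0"
    and rs: "\<forall>i<n. (\<Sum>j<n. A $$ (i, j)) = s"
    and ev: "eigenvector (map_mat complex_of_real A) v l"
  shows "norm l \<le> s"
proof -
  let ?C = "map_mat complex_of_real A"
  have v: "v \<in> carrier_vec n" "v \<noteq> 0\<^sub>v n" "?C *\<^sub>v v = l \<cdot>\<^sub>v v"
    using ev A unfolding eigenvector_def by auto
  have "n > 0" using v by (cases n) auto
  define m where "m = Max ((\<lambda>i. norm (v $ i)) ` {..<n})"
  obtain i where i: "i < n" "norm (v $ i) = m"
    unfolding m_def using Max_in[of "(\<lambda>i. norm (v $ i)) ` {..<n}"] \<open>n > 0\<close> by fastforce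
  have mle: "\<And>j. j < n \<Longrightarrow> norm (v $ j) \<le> m" unfolding m_def by auto
  obtain j where j: "j < n" "v $ j \<noteq> 0"
    using v(1,2) by (metis eq_vecI carrier_vecD index_zero_vec(1,2))
  have mpos: "m > 0" using mle[OF j(1)] j(2) by (meson less_le_trans zero_less_norm_iff)
  have "l * v $ i = (?C *\<^sub>v v) $ i" using v i by simp
  also have "\<dots> = (\<Sum>j<n. complex_of_real (A $$ (i, j)) * v $ j)"
    using A v(1) i by (simp add: scalar_prod_def lessThan_atLeast0)
  finally have eq: "l * v $ i = (\<Sum>j<n. complex_of_real (A $$ (i, j)) * v $ j)" .
  have "norm l * m = norm (l * v $ i)" using i by (simp add: norm_mult)
  also have "\<dots> \<le> (\<Sum>j<n. norm (complex_of_real (A $$ (i, j)) * v $ j))"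
    unfolding eq by (rule norm_sum)
  also have "\<dots> \<le> (\<Sum>j<n. A $$ (i, j) * m)"
  proof (rule sum_mono)
    fix j assume "j \<in> {..<n}"
    then show "norm (complex_of_real (A $$ (i, j)) * v $ j) \<le> A $$ (i, j) * m"
      using nn i mle by (simp add: norm_mult mult_left_mono)
  qed
  also have "\<dots> = s * m" using rs i by (simp add: sum_distrib_right[symmetric])
  finally show ?thesis using mpos by simp
qed

lemma spec_bound:
  fixes A :: "real mat"
  assumes A: "A \<in> carrier_mat n n" and nn: "\<forall>i<n. \<forall>j<n. A $$ (i, j) \<ge> 0"
    and rs: "\<forall>i<n. (\<Sum>j<n. A $$ (i, j)) = s" and n: "n > 0"
  shows "spectral_radius (map_mat complex_of_real A) \<le> s"
proof -
  have C: "map_mat complex_of_real A \<in> carrier_mat n n" using A by simp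
  from spectral_radius_mem_max(1)[OF C n] obtain l where
    "l \<in> spectrum (map_mat complex_of_real A)" "spectral_radius (map_mat complex_of_real A) = norm l"
    by auto
  then show ?thesis using eig_bound[OF A nn rs]
    unfolding spectrum_def eigenvalue_def by auto
qed

lemma pow_summable:
  fixes A :: "real mat"
  assumes A: "A \<in> carrier_mat n n" and nn: "\<forall>i<n. \<forall>j<n. A $$ (i, j) \<ge> 0"
    and rs: "\<forall>i<n. (\<Sum>j<n. A $$ (i, j)) = s" and s0: "0 \<le> s" and s1: "s < 1"
    and ij: "i < n" "j < n"
  shows "summable (\<lambda>k. (A ^\<^sub>m k) $$ (i, j))"
proof (rule summable_comparison_test[OF _ summable_geometric[of s]])
  show "norm s < 1" using s0 s1 by simp
  show "\<exists>N. \<forall>k\<ge>N. norm ((A ^\<^sub>m k) $$ (i, j)) \<le> s ^ k"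
  proof (intro exI allI impI)
    fix k
    note P = pow_props[OF A nn rs, of k]
    have "(A ^\<^sub>m k) $$ (i, j) \<le> (\<Sum>j<n. (A ^\<^sub>m k) $$ (i, j))"
      using P ij by (intro member_le_sum) auto
    then show "norm ((A ^\<^sub>m k) $$ (i, j)) \<le> s ^ k" using P ij by auto
  qed
qed

lemma series_inv:
  fixes A :: "real mat"
  assumes A: "A \<in> carrier_mat n n" and nn: "\<forall>i<n. \<forall>j<n. A $$ (i, j) \<ge> 0"
    and rs: "\<forall>i<n. (\<Sum>j<n. A $$ (i, j)) = s" and s0: "0 \<le> s" and s1: "s < 1"
  defines "R \<equiv> mat n n (\<lambda>(i, j). suminf (\<lambda>k. (A ^\<^sub>m k) $$ (i, j)))"
  shows "R * (1\<^sub>m n - A) = 1\<^sub>m n"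
proof (rule eq_matI)
  note sm = pow_summable[OF A nn rs s0 s1]
  have Rc: "R \<in> carrier_mat n n" unfolding R_def by simp
  have IA: "1\<^sub>m n - A \<in> carrier_mat n n" using A by (rule minus_carrier_mat)
  show "dim_row (R * (1\<^sub>m n - A)) = dim_row (1\<^sub>m n)" "dim_col (R * (1\<^sub>m n - A)) = dim_col (1\<^sub>m n)"
    using Rc IA by auto
  fix i j assume "i < dim_row (1\<^sub>m n :: real mat)" "j < dim_col (1\<^sub>m n :: real mat)"
  then have i: "i < n" and j: "j < n" by auto
  have "(R * (1\<^sub>m n - A)) $$ (i, j) = (\<Sum>m<n. R $$ (i, m) * (1\<^sub>m n - A) $$ (m, j))"
    using mult_entry[OF Rc IA i j] .
  also have "\<dots> = (\<Sum>m<n. R $$ (i, m) * ((if m = j then 1 else 0) - A $$ (m, j)))"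
    using A j by (intro sum.cong) auto
  also have "\<dots> = R $$ (i, j) - (\<Sum>m<n. R $$ (i, m) * A $$ (m, j))"
  proof -
    have "(\<Sum>m<n. R $$ (i, m) * ((if m = j then 1 else 0) - A $$ (m, j)))
        = (\<Sum>m<n. (if m = j then R $$ (i, m) else 0)) - (\<Sum>m<n. R $$ (i, m) * A $$ (m, j))"
      unfolding sum_subtractf[symmetric] by (rule sum.cong) (auto simp: algebra_simps)
    then show ?thesis using j by simp
  qed
  also have "(\<Sum>m<n. R $$ (i, m) * A $$ (m, j)) = (\<Sum>m<n. suminf (\<lambda>k. (A ^\<^sub>m k) $$ (i, m) * A $$ (m, j)))"
    using i sm[OF i] by (intro sum.cong) (auto simp: R_def suminf_mult2)
  also have "\<dots> = suminf (\<lambda>k. \<Sum>m<n. (A ^\<^sub>m k) $$ (i, m) * A $$ (m, j))"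
    using i sm[OF i] by (intro suminf_sum[symmetric] summable_mult2) auto
  also have "\<dots> = suminf (\<lambda>k. (A ^\<^sub>m Suc k) $$ (i, j))"
  proof -
    have "\<And>k. (\<Sum>m<n. (A ^\<^sub>m k) $$ (i, m) * A $$ (m, j)) = (A ^\<^sub>m Suc k) $$ (i, j)"
      using mult_entry[OF _ A i j] pow_props[OF A nn rs] by simp
    then show ?thesis by simp
  qed
  also have "\<dots> = R $$ (i, j) - (A ^\<^sub>m 0) $$ (i, j)"
    using suminf_split_head[OF sm[OF i j]] i j by (simp add: R_def)
  finally show "(R * (1\<^sub>m n - A)) $$ (i, j) = 1\<^sub>m n $$ (i, j)" using A i j by simp
qed

lemma inverse_unique:
  fixes X P :: "real mat"
  assumes X: "X \<in> carrier_mat n n" and P: "P \<in> carrier_mat n n" and PX: "P * X = 1\<^sub>m n"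
  shows "the (mat_inverse X) = P"
proof -
  have XP: "X * P = 1\<^sub>m n" by (rule mat_mult_left_right_inverse[OF P X PX])
  show ?thesis
  proof (cases "mat_inverse X")
    case None
    have "X \<in> Units (ring_mat TYPE(real) n (undefined::unit))"
      unfolding Units_def using X P PX XP by (auto simp: ring_mat_simps ring_mat_def)
    then show ?thesis using mat_inverse(1)[OF X None, where b = "undefined::unit"] by blast
  next
    case (Some B)
    from mat_inverse(2)[OF X Some] have B: "X * B = 1\<^sub>m n" "B \<in> carrier_mat n n" by auto
    have "P = P * (X * B)" using B P by simp
    also have "\<dots> = (P * X) * B" using P X B by (simp add: assoc_mult_mat)
    also have "\<dots> = B" using PX B by simp
    finally show ?thesis using Some by simp
  qed
qed

lemma conn_pos:
  fixes A :: "real mat"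
  assumes A: "A \<in> carrier_mat n n" and nn: "\<forall>i<n. \<forall>j<n. A $$ (i, j) \<ge> 0"
    and rs: "\<forall>i<n. (\<Sum>j<n. A $$ (i, j)) = s"
    and edge: "\<And>e u v. e \<in> E \<Longrightarrow> joins ends e u v \<Longrightarrow> u < n \<and> v < n \<and> A $$ (u, v) > 0"
    and path: "(i, j) \<in> {(u, v). \<exists>e\<in>E. joins ends e u v}\<^sup>*" and i: "i < n"
  shows "j < n \<and> (\<exists>k. (A ^\<^sub>m k) $$ (i, j) > 0)"
  using path
proof (induction rule: rtrancl_induct)
  case base
  then show ?case using i A by (intro conjI exI[of _ 0]) auto
next
  case (step u v)
  then obtain k where u: "u < n" and k: "(A ^\<^sub>m k) $$ (i, u) > 0" by auto
  from step(2) obtain e where "e \<in> E" "joins ends e u v" by auto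
  with edge have v: "v < n" and a: "A $$ (u, v) > 0" by auto
  note P = pow_props[OF A nn rs, of k]
  have "(A ^\<^sub>m k) $$ (i, u) * A $$ (u, v) \<le> (\<Sum>m<n. (A ^\<^sub>m k) $$ (i, m) * A $$ (m, v))"
    using P nn u v i by (intro member_le_sum) auto
  also have "\<dots> = (A ^\<^sub>m Suc k) $$ (i, v)"
    using mult_entry[OF _ A i v] P by simp
  finally have "(A ^\<^sub>m Suc k) $$ (i, v) > 0" using k a
    by (meson less_le_trans mult_pos_pos)
  then show ?case using v by blast
qed

theorem theorem7:
  fixes n :: nat and E :: "'e set" and ends :: "'e \<Rightarrow> nat \<times> nat" and w :: "'e \<Rightarrow> real"
    and As :: "real set" and \<phi> :: "real \<Rightarrow> real \<Rightarrow> real" and \<theta> :: "real \<Rightarrow> real"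
  assumes "n \<ge> 2"
    and "wmultigraph n E ends w"
    and "mg_connected n E ends"
    and "\<And>\<alpha> x. \<alpha> \<in> As \<Longrightarrow> x > 0 \<Longrightarrow> \<phi> \<alpha> x > 0"
    and "\<And>\<alpha>. \<alpha> \<in> As \<Longrightarrow> \<theta> \<alpha> > 0"
  shows "\<forall>\<alpha>\<in>As. \<exists>c > 0. \<exists>lw :: nat \<Rightarrow> real. (\<forall>i<n. lw i \<ge> 0) \<and>
     (let A = c \<cdot>\<^sub>m adj_mat n E ends (\<lambda>e. \<phi> \<alpha> (w e)) + mat n n (\<lambda>(i, j). if i = j then lw i else 0)
      in row_sums_const n A \<and>
         spectral_radius (map_mat complex_of_real A) < 1 \<and>
         (\<exists>R \<in> carrier_mat n n.
            (\<forall>i<n. \<forall>j<n. (\<lambda>N. \<Sum>k<N. (A ^\<^sub>m k) $$ (i, j)) \<longlonglongrightarrow> R $$ (i, j)) \<and>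
            R * (1\<^sub>m n - A) = 1\<^sub>m n \<and>
            (\<forall>i<n. \<forall>j<n. log_forest_dist n E ends (\<lambda>e. \<phi> \<alpha> (w e)) (\<theta> \<alpha>) i j
                           = log_dist (\<theta> \<alpha>) R i j)))"
proof
  fix \<alpha> assume \<alpha>: "\<alpha> \<in> As"
  note wm = assms(2)[unfolded wmultigraph_def]
  define wa where "wa = (\<lambda>e. \<phi> \<alpha> (w e))"
  have wa_pos: "\<And>e. e \<in> E \<Longrightarrow> wa e > 0" using wm assms(4)[OF \<alpha>] unfolding wa_def by auto
  define W where "W = adj_mat n E ends wa"
  have Wc: "W \<in> carrier_mat n n" unfolding W_def adj_mat_def by simp
  have Wij: "\<And>i j. i < n \<Longrightarrow> j < n \<Longrightarrow> W $$ (i, j) = (\<Sum>e\<in>{e\<in>E. joins ends e i j}. wa e)"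
    unfolding W_def adj_mat_def by simp
  have Wnn: "\<And>i j. i < n \<Longrightarrow> j < n \<Longrightarrow> W $$ (i, j) \<ge> 0"
    using wa_pos by (simp add: Wij, intro sum_nonneg) (auto intro: less_imp_le)
  have Wedge: "\<And>e u v. e \<in> E \<Longrightarrow> joins ends e u v \<Longrightarrow> u < n \<and> v < n \<and> W $$ (u, v) \<ge> wa e"
  proof -
    fix e u v assume e: "e \<in> E" "joins ends e u v"
    then have uv: "u < n" "v < n" using wm unfolding joins_def by (metis fst_conv snd_conv)+
    have "wa e \<le> (\<Sum>e\<in>{e\<in>E. joins ends e u v}. wa e)"
      using e wm wa_pos by (intro member_le_sum) (auto intro: less_imp_le)
    then show "u < n \<and> v < n \<and> W $$ (u, v) \<ge> wa e" using uv Wij by simp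
  qed
  define d where "d i = (\<Sum>k<n. W $$ (i, k))" for i
  define M where "M = (\<Sum>i<n. d i)"
  have d_nn: "\<And>i. i < n \<Longrightarrow> d i \<ge> 0" unfolding d_def using Wnn by (auto intro: sum_nonneg)
  have d_le: "\<And>i. i < n \<Longrightarrow> d i \<le> M" unfolding M_def using d_nn by (intro member_le_sum) auto
  have M0: "M \<ge> 0" unfolding M_def using d_nn by (auto intro: sum_nonneg)
  define c where "c = 1 / (1 + M)"
  have c0: "c > 0" unfolding c_def using M0 by simp
  have cM: "c * M = 1 - c" unfolding c_def using M0 by (simp add: field_simps)
  define lw where "lw i = c * (M - d i)" for i
  have lw_nn: "\<forall>i<n. lw i \<ge> 0" unfolding lw_def using c0 d_le by simp
  define A where "A = c \<cdot>\<^sub>m W + mat n n (\<lambda>(i, j). if i = j then lw i else 0)"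
  have Ac: "A \<in> carrier_mat n n" unfolding A_def using Wc by simp
  have Aij: "\<And>i j. i < n \<Longrightarrow> j < n \<Longrightarrow> A $$ (i, j) = c * W $$ (i, j) + (if i = j then lw i else 0)"
    unfolding A_def using Wc by simp
  have Ann: "\<forall>i<n. \<forall>j<n. A $$ (i, j) \<ge> 0" using Aij Wnn c0 lw_nn by simp
  define s where "s = c * M"
  have s0: "0 \<le> s" unfolding s_def using c0 M0 by simp
  have s1: "s < 1" unfolding s_def using cM c0 by simp
  have Ars: "\<forall>i<n. (\<Sum>j<n. A $$ (i, j)) = s"
  proof (intro allI impI)
    fix i assume i: "i < n"
    have "(\<Sum>j<n. A $$ (i, j)) = (\<Sum>j<n. c * W $$ (i, j)) + (\<Sum>j<n. if i = j then lw i else 0)"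
      using i by (simp add: Aij sum.distrib)
    also have "\<dots> = c * d i + lw i" using i by (simp add: d_def sum_distrib_left)
    also have "\<dots> = s" unfolding lw_def s_def by (simp add: algebra_simps)
    finally show "(\<Sum>j<n. A $$ (i, j)) = s" .
  qed
  have n0: "n > 0" using assms(1) by simp
  have rsc: "row_sums_const n A" unfolding row_sums_const_def using Ars by blast
  have sr: "spectral_radius (map_mat complex_of_real A) < 1"
    using spec_bound[OF Ac Ann Ars n0] s1 by simp
  define R where "R = mat n n (\<lambda>(i, j). suminf (\<lambda>k. (A ^\<^sub>m k) $$ (i, j)))"
  have Rc: "R \<in> carrier_mat n n" unfolding R_def by simp
  have RIA: "R * (1\<^sub>m n - A) = 1\<^sub>m n" unfolding R_def by (rule series_inv[OF Ac Ann Ars s0 s1])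
  have sm: "\<And>i j. i < n \<Longrightarrow> j < n \<Longrightarrow> summable (\<lambda>k. (A ^\<^sub>m k) $$ (i, j))"
    by (rule pow_summable[OF Ac Ann Ars s0 s1])
  have conv: "\<forall>i<n. \<forall>j<n. (\<lambda>N. \<Sum>k<N. (A ^\<^sub>m k) $$ (i, j)) \<longlonglongrightarrow> R $$ (i, j)"
    using sm summable_LIMSEQ by (auto simp: R_def)
  define L where "L = laplacian n W"
  have Lc: "L \<in> carrier_mat n n" unfolding L_def laplacian_def by simp
  have IL: "1\<^sub>m n - A = c \<cdot>\<^sub>m (1\<^sub>m n + L)"
  proof (rule eq_matI)
    fix i j assume "i < dim_row (c \<cdot>\<^sub>m (1\<^sub>m n + L))" "j < dim_col (c \<cdot>\<^sub>m (1\<^sub>m n + L))"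
    then have i: "i < n" and j: "j < n" using Lc by auto
    have Lij: "L $$ (i, j) = (if i = j then d i else 0) - W $$ (i, j)"
      unfolding L_def laplacian_def d_def using i j by simp
    show "(1\<^sub>m n - A) $$ (i, j) = (c \<cdot>\<^sub>m (1\<^sub>m n + L)) $$ (i, j)"
      using i j Ac Lc cM by (simp add: Aij Lij lw_def algebra_simps)
  qed (use Ac Lc in auto)
  have cRIL: "(c \<cdot>\<^sub>m R) * (1\<^sub>m n + L) = 1\<^sub>m n"
  proof -
    have ILc: "1\<^sub>m n + L \<in> carrier_mat n n" using Lc by (simp add: add_carrier_mat)
    have "(c \<cdot>\<^sub>m R) * (1\<^sub>m n + L) = c \<cdot>\<^sub>m (R * (1\<^sub>m n + L))"
      by (rule mult_smult_assoc_mat[OF Rc ILc])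
    also have "\<dots> = R * (c \<cdot>\<^sub>m (1\<^sub>m n + L))"
      by (rule mult_smult_distrib[OF Rc ILc, symmetric])
    finally show ?thesis using RIA IL by simp
  qed
  have Q: "forest_mat n L = c \<cdot>\<^sub>m R"
    unfolding forest_mat_def using Rc Lc cRIL by (intro inverse_unique) auto
  have Rpos: "\<And>i j. i < n \<Longrightarrow> j < n \<Longrightarrow> R $$ (i, j) > 0"
  proof -
    fix i j assume i: "i < n" and j: "j < n"
    have edge: "\<And>e u v. e \<in> E \<Longrightarrow> joins ends e u v \<Longrightarrow> u < n \<and> v < n \<and> A $$ (u, v) > 0"
    proof -
      fix e u v assume e: "e \<in> E" "joins ends e u v"
      from Wedge[OF e] wa_pos[OF e(1)] have uv: "u < n" "v < n" "W $$ (u, v) > 0" by auto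
      then have "c * W $$ (u, v) > 0" using c0 by simp
      then show "u < n \<and> v < n \<and> A $$ (u, v) > 0" using uv lw_nn Aij
        by (smt (verit))
    qed
    from assms(3)[unfolded mg_connected_def] i j
    have path: "(i, j) \<in> {(u, v). \<exists>e\<in>E. joins ends e u v}\<^sup>*" by blast
    have "j < n \<and> (\<exists>k. (A ^\<^sub>m k) $$ (i, j) > 0)"
      apply (rule conn_pos[where E = E and ends = ends, OF Ac Ann Ars])
      using edge apply blast
      using path i by auto
    then obtain k where k: "(A ^\<^sub>m k) $$ (i, j) > 0" by auto
    have "sum (\<lambda>k. (A ^\<^sub>m k) $$ (i, j)) {k} \<le> suminf (\<lambda>k. (A ^\<^sub>m k) $$ (i, j))"
      using sm[OF i j] pow_props[OF Ac Ann Ars] i j by (intro sum_le_suminf) auto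
    then show "R $$ (i, j) > 0" using k i j by (simp add: R_def)
  qed
  have dist: "\<forall>i<n. \<forall>j<n. log_forest_dist n E ends wa (\<theta> \<alpha>) i j = log_dist (\<theta> \<alpha>) R i j"
  proof (intro allI impI)
    fix i j assume i: "i < n" and j: "j < n"
    have e: "ln ((c \<cdot>\<^sub>m R) $$ (a, b)) = ln c + ln (R $$ (a, b))" if ab: "a < n" "b < n" for a b
      using ab Rc c0 Rpos[OF ab] by (simp add: ln_mult)
    show "log_forest_dist n E ends wa (\<theta> \<alpha>) i j = log_dist (\<theta> \<alpha>) R i j"
      unfolding log_forest_dist_def W_def[symmetric] L_def[symmetric] Q log_dist_def
      using e[OF i i] e[OF j j] e[OF i j] by (simp add: algebra_simps)
  qed
  show "\<exists>c > 0. \<exists>lw :: nat \<Rightarrow> real. (\<forall>i<n. lw i \<ge> 0) \<and>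
     (let A = c \<cdot>\<^sub>m adj_mat n E ends (\<lambda>e. \<phi> \<alpha> (w e)) + mat n n (\<lambda>(i, j). if i = j then lw i else 0)
      in row_sums_const n A \<and>
         spectral_radius (map_mat complex_of_real A) < 1 \<and>
         (\<exists>R \<in> carrier_mat n n.
            (\<forall>i<n. \<forall>j<n. (\<lambda>N. \<Sum>k<N. (A ^\<^sub>m k) $$ (i, j)) \<longlonglongrightarrow> R $$ (i, j)) \<and>
            R * (1\<^sub>m n - A) = 1\<^sub>m n \<and>
            (\<forall>i<n. \<forall>j<n. log_forest_dist n E ends (\<lambda>e. \<phi> \<alpha> (w e)) (\<theta> \<alpha>) i j
                           = log_dist (\<theta> \<alpha>) R i j)))"
    apply (rule exI[of _ c], rule conjI[OF c0], rule exI[of _ lw], rule conjI[OF lw_nn])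
    unfolding Let_def wa_def[symmetric] W_def[symmetric] A_def[symmetric]
    using rsc sr Rc conv RIA dist by blast
qed

end
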